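(* The sequence $\left\{\dfrac{\exp(H_n)\log(H_n)}{n}\right\}_{n=1}^\infty$ is monotonically increasing.
   Context: $H_n=1+\frac12+\cdots+\frac1n$ is the $n$-th harmonic number. *)

theory Defs
  imports "HOL-Analysis.Analysis"
begin

end

theory Submission
  imports Defs
begin

lemma harm_ge1: "n \<ge> 1 \<Longrightarrow> (harm n :: real) \<ge> 1"
  using harm_mono[of 1 n] by (simp add: harm_def)

lemma harm_le_half: "2 * (harm n :: real) \<le> real n + 1"
proof (induction n)
  case 0 then show ?case by (simp add: harm_def)
next
  case (Suc n)
  show ?case
  proof (cases "n = 0")
    case True then show ?thesis by (simp add: harm_Suc harm_def)
  next
    case False
    then have "inverse (real (Suc n)) \<le> 1/2" by (simp add: field_simps)
    then show ?thesis using Suc by (simp add: harm_Suc)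
  qed
qed

lemma harm_sq: "(harm n :: real) * (harm n - 1) \<le> real n"
proof (induction n)
  case 0 then show ?case by (simp add: harm_def)
next
  case (Suc n)
  define H where "H = (harm n :: real)"
  define d where "d = inverse (real (Suc n))"
  have d: "d * real (Suc n) = 1" "d > 0" unfolding d_def by auto
  have h2: "2 * H \<le> real n + 1" using harm_le_half unfolding H_def .
  have "(H + d) * (H + d - 1) - H * (H - 1) = d * (2*H + d - 1)" by (simp add: algebra_simps)
  also have "\<dots> \<le> d * real (Suc n)"
  proof -
    have "d \<le> 1" using d by (simp add: d_def field_simps)
    then have "2*H + d - 1 \<le> real (Suc n)" using h2 by simp
    then show ?thesis using d by (intro mult_left_mono) auto
  qed
  finally have "(H + d) * (H + d - 1) \<le> H * (H - 1) + 1" using d by simp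
  then show ?case using Suc unfolding H_def d_def by (simp add: harm_Suc)
qed

lemma step:
  assumes n: "n \<ge> 1"
  shows "exp (harm n :: real) * ln (harm n) / real n
         \<le> exp (harm (Suc n)) * ln (harm (Suc n)) / real (Suc n)"
proof -
  define H where "H = (harm n :: real)"
  define H' where "H' = (harm (Suc n) :: real)"
  define m where "m = real (Suc n)"
  have m: "m \<ge> 2" using n unfolding m_def by simp
  have HH': "H' = H + 1/m" unfolding H_def H'_def m_def by (simp add: harm_Suc field_simps)
  have H1: "H \<ge> 1" using harm_ge1[OF n] unfolding H_def .
  have H'1: "H' \<ge> 1" using H1 HH' m by (simp add: add_increasing2)
  have sq: "H' * (H' - 1) \<le> m" using harm_sq[of "Suc n"] unfolding H'_def m_def .
  have lnH'ge0: "ln H' \<ge> 0" using H'1 by simp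
  have lnHge0: "ln H \<ge> 0" using H1 by simp
  have "ln (H / H') \<le> H / H' - 1" using H1 H'1 by (intro ln_le_minus_one) auto
  moreover have "ln (H / H') = ln H - ln H'" using H1 H'1 by (simp add: ln_div)
  moreover have "H / H' - 1 = - 1 / (m * H')" proof -
    have "H = H' - 1/m" using HH' by simp
    then have "H / H' - 1 = (H' - 1/m) / H' - 1" by simp
    also have "\<dots> = - 1 / (m * H')" using H'1 m by (simp add: field_simps)
    finally show ?thesis .
  qed
  ultimately have d1: "ln H' - ln H \<ge> 1 / (m * H')" by simp
  have lnle: "ln H' \<le> H' - 1" using H'1 by (intro ln_le_minus_one) auto
  have "H' * ln H' \<le> m" using sq lnle H'1 by (meson mult_left_mono order_trans less_le_trans zero_less_one less_imp_le)
  then have "ln H' \<le> m / H'" using H'1 by (simp add: field_simps)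
  also have "m / H' = m^2 * (1 / (m * H'))" using m by (simp add: field_simps power2_eq_square)
  also have "\<dots> \<le> m^2 * (ln H' - ln H)" using d1 by (intro mult_left_mono) auto
  finally have key: "m^2 * ln H \<le> (m^2 - 1) * ln H'" by (simp add: algebra_simps)
  have e: "exp (1/m) \<ge> 1 + 1/m" by (rule exp_ge_add_one_self)
  have eH': "exp H' = exp H * exp (1/m)" using HH' by (simp add: exp_add)
  have "exp H * ln H / real n = exp H * (ln H / (m - 1))" using m by (simp add: m_def)
  also have "ln H / (m - 1) \<le> (1 + 1/m) * ln H' / m"
  proof -
    have "(1 + 1/m) * ln H' / m = (m+1) * ln H' / m^2" using m by (simp add: field_simps power2_eq_square)
    moreover have "ln H / (m - 1) \<le> (m+1) * ln H' / m^2"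
      using key m by (simp add: field_simps power2_eq_square algebra_simps)
    ultimately show ?thesis by simp
  qed
  then have "exp H * (ln H / (m - 1)) \<le> exp H * ((1 + 1/m) * ln H' / m)"
    by (intro mult_left_mono) auto
  also have "\<dots> \<le> exp H * (exp (1/m) * ln H' / m)"
    using e lnH'ge0 m by (intro mult_left_mono divide_right_mono mult_right_mono) auto
  also have "\<dots> = exp H' * ln H' / m" using eH' by simp
  finally show ?thesis unfolding H_def H'_def m_def .
qed

theorem mainTheorem18:
  shows "mono_on {1..} (\<lambda>n::nat. exp (harm n :: real) * ln (harm n) / real n)"
proof -
  have "\<And>a b. 1 \<le> a \<Longrightarrow> a \<le> b \<Longrightarrow> exp (harm a :: real) * ln (harm a) / real a \<le> exp (harm b) * ln (harm b) / real b"
  proof -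
    fix a b :: nat assume a: "1 \<le> a" and ab: "a \<le> b"
    show "exp (harm a :: real) * ln (harm a) / real a \<le> exp (harm b) * ln (harm b) / real b"
      using ab
    proof (induction b rule: dec_induct)
      case base then show ?case by simp
    next
      case (step k)
      then show ?case using Submission.step[of k] a by simp
    qed
  qed
  then show ?thesis by (auto intro: mono_onI)
qed

end
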